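(* Let $(X,\mathtt{d})$ be an instance of metric $k$-center clustering with $z$ outliers, $|X|=n$, $\gamma=z/n$, and let $\epsilon>0$ and $\eta\in(0,1/2)$. Run Algorithm 1 (described in the context) with $t=\frac{ck}{1-\eta}$ where $c=2+\frac{2}{k(1-\eta)}\ln\frac{1}{\eta}$, and let $E$ be its output. Then with probability at least $1-2\eta$, $\phi_{\epsilon}(X,E)\leq 2r_{\mathtt{opt}}$.
   Context: Let $(X,\mathtt{d})$ be a finite metric space with $|X|=n$ and let $k,z$ be positive integers with $z<n$. The $k$-center clustering with $z$ outliers problem asks for $X'\subseteq X$ with $|X'|\geq n-z$ and centers $c_1,\dots,c_k\in X$ minimizing $\max_{p\in X'}\min_j\mathtt{d}(p,c_j)$; $r_{\mathtt{opt}}$ denotes the optimal value. For $p\in X$ and $E\subseteq X$, $\mathtt{d}(p,E)=\min_{q\in E}\mathtt{d}(p,q)$. For $\epsilon\geq 0$ and a set $A\subseteq X$ (of any size), $\phi_\epsilon(X,A)=\min\{\max_{p\in X'}\mathtt{d}(p,A)\;:\;X'\subseteq X,\ |X'|\geq n-(1+\epsilon)z\}$. Algorithm 1 (input $(X,\mathtt{d})$, $k,z$, parameters $\epsilon>0$, $\eta\in(0,1/2)$, $t\in\mathbb{Z}^+$): Let $\gamma=z/n$ and $E=\emptyset$. Set $j=1$ and add to $E$ a set of $\frac{1}{1-\gamma}\log\frac{1}{\eta}$ vertices selected uniformly at random from $X$. Then, while $j<t$: set $j=j+1$; let $Q_j$ be the set of the $(1+\epsilon)z$ vertices of $X$ farthest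 from $E$ (w.r.t. $\mathtt{d}(\cdot,E)$); add to $E$ a set of $\frac{1+\epsilon}{\epsilon}\log\frac{1}{\eta}$ vertices selected uniformly at random from $Q_j$. Output $E$. *)

theory Defs
  imports "HOL-Probability.Probability"
begin

definition metric_on :: "'a set \<Rightarrow> ('a \<Rightarrow> 'a \<Rightarrow> real) \<Rightarrow> bool" where
  "metric_on X d \<longleftrightarrow>
     (\<forall>p\<in>X. \<forall>q\<in>X. d p q \<ge> 0 \<and> d p q = d q p \<and> (d p q = 0 \<longleftrightarrow> p = q)) \<and>
     (\<forall>p\<in>X. \<forall>q\<in>X. \<forall>r\<in>X. d p r \<le> d p q + d q r)"

definition setdist :: "('a \<Rightarrow> 'a \<Rightarrow> real) \<Rightarrow> 'a \<Rightarrow> 'a set \<Rightarrow> real" where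
  "setdist d p E = Min ((\<lambda>q. d p q) ` E)"

definition maxdist :: "('a \<Rightarrow> 'a \<Rightarrow> real) \<Rightarrow> 'a set \<Rightarrow> 'a set \<Rightarrow> real" where
  "maxdist d X' A = (if X' = {} then 0 else Max ((\<lambda>p. setdist d p A) ` X'))"

definition r_opt :: "'a set \<Rightarrow> ('a \<Rightarrow> 'a \<Rightarrow> real) \<Rightarrow> nat \<Rightarrow> nat \<Rightarrow> real" where
  "r_opt X d k z = Min {maxdist d X' C | X' C.
      X' \<subseteq> X \<and> card X' \<ge> card X - z \<and> C \<subseteq> X \<and> C \<noteq> {} \<and> card C \<le> k}"

definition phi :: "'a set \<Rightarrow> ('a \<Rightarrow> 'a \<Rightarrow> real) \<Rightarrow> nat \<Rightarrow> real \<Rightarrow> 'a set \<Rightarrow> real" where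
  "phi X d z eps A = Min {maxdist d X' A | X'.
      X' \<subseteq> X \<and> real (card X') \<ge> real (card X) - (1 + eps) * real z}"

text \<open>m vertices sampled independently and uniformly at random from S
  (with replacement); the result is the set of sampled vertices.\<close>
fun sample :: "nat \<Rightarrow> 'a set \<Rightarrow> 'a set pmf" where
  "sample 0 S = return_pmf {}"
| "sample (Suc m) S =
     pmf_of_set S \<bind> (\<lambda>x. sample m S \<bind> (\<lambda>R. return_pmf (insert x R)))"

text \<open>Q is a valid choice of "the (1+eps)z vertices of X farthest from E"
  (ties broken arbitrarily; the size (1+eps)z is rounded up and capped by n).\<close>
definition farthest_rule :: "'a set \<Rightarrow> ('a \<Rightarrow> 'a \<Rightarrow> real) \<Rightarrow> nat \<Rightarrow> real \<Rightarrow> ('a set \<Rightarrow> 'a set) \<Rightarrow> bool" where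
  "farthest_rule X d z eps Q \<longleftrightarrow>
     (\<forall>E. E \<subseteq> X \<and> E \<noteq> {} \<longrightarrow>
        Q E \<subseteq> X \<and> card (Q E) = min (card X) (nat \<lceil>(1 + eps) * real z\<rceil>) \<and>
        (\<forall>p\<in>Q E. \<forall>q\<in>X - Q E. setdist d q E \<le> setdist d p E))"

text \<open>The while loop
  "while j < t" starting at j = 1 performs ceil(t) - 1 iterations (for t \<ge> 1);
  sample sizes are rounded up; logarithms are natural.\<close>
definition algorithm1 :: "'a set \<Rightarrow> nat \<Rightarrow> ('a set \<Rightarrow> 'a set) \<Rightarrow> real \<Rightarrow> real \<Rightarrow> real \<Rightarrow> 'a set pmf" where
  "algorithm1 X z Q eps eta t =
     (let gamma = real z / real (card X);
          m1 = nat \<lceil>(1 / (1 - gamma)) * ln (1 / eta)\<rceil>;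
          m2 = nat \<lceil>((1 + eps) / eps) * ln (1 / eta)\<rceil>;
          step = (\<lambda>E. sample m2 (Q E) \<bind> (\<lambda>S. return_pmf (E \<union> S)))
      in ((\<lambda>P. P \<bind> step) ^^ (nat \<lceil>t\<rceil> - 1)) (sample m1 X))"

end

theory Submission
  imports Defs
begin

lemma sample_support:
  assumes "finite S" "S \<noteq> {}"
  shows "R \<in> set_pmf (sample m S) \<Longrightarrow> R \<subseteq> S \<and> (m > 0 \<longrightarrow> R \<noteq> {})"
  using assms by (induction m arbitrary: R) auto

lemma sample_miss:
  assumes "finite S" "S \<noteq> {}"
  shows "emeasure (measure_pmf (sample m S)) {R. R \<inter> G = {}}
           \<le> ennreal ((real (card (S - G)) / real (card S)) ^ m)"
proof (induction m)
  case 0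
  then show ?case by (simp add: measure_pmf.emeasure_le_1)
next
  case (Suc m)
  let ?B = "{R. R \<inter> G = {}}"
  let ?a = "real (card (S - G)) / real (card S)"
  have "emeasure (measure_pmf (sample (Suc m) S)) ?B
      = (\<integral>\<^sup>+x. (\<integral>\<^sup>+R. indicator ?B (insert x R) \<partial>sample m S) \<partial>pmf_of_set S)"
    by (simp add: emeasure_return)
  also have "\<dots> = (\<integral>\<^sup>+x. indicator (-G) x * emeasure (measure_pmf (sample m S)) ?B \<partial>pmf_of_set S)"
  proof (rule nn_integral_cong)
    fix x
    have "(\<lambda>R. indicator ?B (insert x R) :: ennreal) = (\<lambda>R. indicator (-G) x * indicator ?B R)"
      by (auto simp: indicator_def)
    then show "(\<integral>\<^sup>+R. indicator ?B (insert x R) \<partial>sample m S) = indicator (-G) x * emeasure (measure_pmf (sample m S)) ?B"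
      by (simp add: nn_integral_cmult_indicator)
  qed
  also have "\<dots> \<le> (\<integral>\<^sup>+x. indicator (-G) x * ennreal (?a ^ m) \<partial>pmf_of_set S)"
    by (intro nn_integral_mono mult_left_mono Suc) auto
  also have "\<dots> = ennreal (?a ^ m) * emeasure (measure_pmf (pmf_of_set S)) (-G)"
    by (subst mult.commute) (simp add: nn_integral_cmult_indicator)
  also have "\<dots> = ennreal (?a ^ m) * ennreal ?a"
    using assms by (simp add: emeasure_pmf_of_set Diff_eq Int_commute ennreal_of_nat_eq_real_of_nat divide_ennreal)
  also have "\<dots> = ennreal (?a ^ Suc m)"
    by (simp add: ennreal_mult[symmetric] mult.commute)
  finally show ?case .
qed

lemma step_lemma:
  fixes M :: "'b pmf" and f :: "'b \<Rightarrow> real"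
  assumes "emeasure (measure_pmf M) B \<le> ennreal eta" "0 \<le> V0" "0 \<le> eta"
    "\<And>x. x \<in> set_pmf M \<Longrightarrow> f x \<le> V0"
    "\<And>x. x \<in> set_pmf M \<Longrightarrow> x \<notin> B \<Longrightarrow> f x \<le> V0 / 2"
  shows "(\<integral>\<^sup>+x. ennreal (f x) \<partial>M) \<le> ennreal ((1 + eta) / 2 * V0)"
proof -
  have "(\<integral>\<^sup>+x. ennreal (f x) \<partial>M) \<le> (\<integral>\<^sup>+x. ennreal (V0/2) + ennreal (V0/2) * indicator B x \<partial>M)"
  proof (rule nn_integral_mono_AE)
    show "AE x in measure_pmf M. ennreal (f x) \<le> ennreal (V0/2) + ennreal (V0/2) * indicator B x"
      unfolding AE_measure_pmf_iff
    proof
      fix x assume x: "x \<in> set_pmf M"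
      show "ennreal (f x) \<le> ennreal (V0/2) + ennreal (V0/2) * indicator B x"
      proof (cases "x \<in> B")
        case True
        have "ennreal (V0/2) + ennreal (V0/2) = ennreal V0"
          by (subst ennreal_plus[symmetric]) (use assms(2) in auto)
        then have "ennreal (V0/2) + ennreal (V0/2) * indicator B x = ennreal V0"
          using True by simp
        then show ?thesis using assms(4)[OF x] by (simp add: ennreal_leI)
      next
        case False
        then show ?thesis using assms(5)[OF x] by (simp add: ennreal_leI)
      qed
    qed
  qed
  also have "\<dots> = ennreal (V0/2) + ennreal (V0/2) * emeasure (measure_pmf M) B"
    by (simp add: nn_integral_add nn_integral_cmult_indicator measure_pmf.emeasure_space_1)
  also have "\<dots> \<le> ennreal (V0/2) + ennreal (V0/2) * ennreal eta"
    by (intro add_left_mono mult_left_mono assms(1)) auto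
  also have "\<dots> = ennreal (V0/2) + ennreal (V0/2 * eta)"
    by (subst ennreal_mult) (use assms in auto)
  also have "\<dots> = ennreal (V0/2 + V0/2 * eta)"
    by (subst ennreal_plus) (use assms in auto)
  also have "V0/2 + V0/2 * eta = (1 + eta) / 2 * V0"
    by (simp add: field_simps)
  finally show ?thesis .
qed

lemma iter_bound:
  fixes step :: "'b \<Rightarrow> 'b pmf" and V :: "'b \<Rightarrow> real"
  assumes "\<forall>E\<in>set_pmf P0. Inv E"
    "\<And>E. Inv E \<Longrightarrow> \<forall>E'\<in>set_pmf (step E). Inv E'"
    "\<And>E. Inv E \<Longrightarrow> (\<integral>\<^sup>+E'. ennreal (V E') \<partial>step E) \<le> q * ennreal (V E)"
  shows "(\<forall>E\<in>set_pmf (((\<lambda>P. bind_pmf P step)^^n) P0). Inv E) \<and>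
    (\<integral>\<^sup>+E. ennreal (V E) \<partial>measure_pmf (((\<lambda>P. bind_pmf P step)^^n) P0)) \<le> q ^ n * (\<integral>\<^sup>+E. ennreal (V E) \<partial>P0)"
proof (induction n)
  case 0
  then show ?case using assms(1) by simp
next
  case (Suc n)
  let ?P = "((\<lambda>P. bind_pmf P step)^^n) P0"
  have inv: "\<forall>E\<in>set_pmf ?P. Inv E" using Suc by blast
  have "(\<integral>\<^sup>+E. ennreal (V E) \<partial>(bind_pmf ?P step)) = (\<integral>\<^sup>+E. (\<integral>\<^sup>+E'. ennreal (V E') \<partial>step E) \<partial>?P)"
    by simp
  also have "\<dots> \<le> (\<integral>\<^sup>+E. q * ennreal (V E) \<partial>?P)"
    using inv assms(3) by (intro nn_integral_mono_AE) (auto simp: AE_measure_pmf_iff)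
  also have "\<dots> = q * (\<integral>\<^sup>+E. ennreal (V E) \<partial>?P)"
    by (simp add: nn_integral_cmult)
  also have "\<dots> \<le> q * (q ^ n * (\<integral>\<^sup>+E. ennreal (V E) \<partial>P0))"
    using Suc by (intro mult_left_mono) auto
  finally have "(\<integral>\<^sup>+E. ennreal (V E) \<partial>(bind_pmf ?P step)) \<le> q ^ Suc n * (\<integral>\<^sup>+E. ennreal (V E) \<partial>P0)"
    by (simp add: mult.assoc)
  moreover have "\<forall>E\<in>set_pmf (bind_pmf ?P step). Inv E" using inv assms(2) by auto
  ultimately show ?case by simp
qed

lemma pow_small:
  fixes b a eta :: real
  assumes "0 \<le> b" "b \<le> a" "a < 1" "0 < eta" "real m \<ge> ln (1/eta) / (1 - a)"
  shows "b ^ m \<le> eta"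
proof -
  have "b ^ m \<le> a ^ m" using assms by (intro power_mono) auto
  also have "\<dots> \<le> exp (a - 1) ^ m"
    using assms exp_ge_add_one_self[of "a - 1"] by (intro power_mono) auto
  also have "\<dots> = exp (- ((1 - a) * real m))"
    by (simp add: exp_of_nat_mult[symmetric] algebra_simps)
  also have "\<dots> \<le> exp (- ln (1/eta))"
  proof -
    have "ln (1/eta) \<le> (1 - a) * real m" using assms by (simp add: field_simps)
    then show ?thesis by simp
  qed
  also have "\<dots> = eta" using assms by (simp add: ln_div)
  finally show ?thesis .
qed



lemma setdist_le: "finite E \<Longrightarrow> q \<in> E \<Longrightarrow> setdist d p E \<le> d p q"
  unfolding setdist_def by (intro Min_le) auto

lemma setdist_ex: "finite E \<Longrightarrow> E \<noteq> {} \<Longrightarrow> \<exists>q\<in>E. setdist d p E = d p q"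
proof -
  assume a: "finite E" "E \<noteq> {}"
  have "Min ((\<lambda>q. d p q) ` E) \<in> (\<lambda>q. d p q) ` E" by (rule Min_in) (use a in auto)
  then show ?thesis by (auto simp: setdist_def)
qed

lemma setdist_mono: "finite E' \<Longrightarrow> E \<subseteq> E' \<Longrightarrow> E \<noteq> {} \<Longrightarrow> setdist d p E' \<le> setdist d p E"
  unfolding setdist_def by (intro Min_antimono) auto

lemma maxdist_mono:
  assumes "finite X'" "finite E'" "E \<subseteq> E'" "E \<noteq> {}"
  shows "maxdist d X' E' \<le> maxdist d X' E"
proof (cases "X' = {}")
  case True then show ?thesis by (simp add: maxdist_def)
next
  case False
  have "Max ((\<lambda>p. setdist d p E') ` X') \<in> (\<lambda>p. setdist d p E') ` X'"
    by (rule Max_in) (use False assms in auto)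
  then obtain p where p: "p \<in> X'" "Max ((\<lambda>p. setdist d p E') ` X') = setdist d p E'"
    by auto
  have "setdist d p E' \<le> setdist d p E" by (rule setdist_mono) (use assms in auto)
  also have "\<dots> \<le> Max ((\<lambda>p. setdist d p E) ` X')" by (rule Max_ge) (use p assms in auto)
  finally have "Max ((\<lambda>p. setdist d p E') ` X') \<le> Max ((\<lambda>p. setdist d p E) ` X')" using p(2) by simp
  then show ?thesis using False unfolding maxdist_def by simp
qed

lemma maxdist_le:
  assumes "finite X'" "\<And>p. p \<in> X' \<Longrightarrow> setdist d p E \<le> b" "0 \<le> b"
  shows "maxdist d X' E \<le> b"
  using assms by (auto simp: maxdist_def)

lemma maxdist_ge:
  assumes "finite X'" "p \<in> X'"
  shows "setdist d p E \<le> maxdist d X' E"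
  using assms by (auto simp: maxdist_def)

lemma phi_set_finite:
  assumes "finite X"
  shows "finite {maxdist d X' E | X'. X' \<subseteq> X \<and> real (card X') \<ge> real (card X) - (1 + eps) * real z}"
proof -
  have "{maxdist d X' E | X'. X' \<subseteq> X \<and> real (card X') \<ge> real (card X) - (1 + eps) * real z}
     = (\<lambda>X'. maxdist d X' E) ` {X'. X' \<subseteq> X \<and> real (card X') \<ge> real (card X) - (1 + eps) * real z}"
    by blast
  moreover have "finite {X'. X' \<subseteq> X \<and> real (card X') \<ge> real (card X) - (1 + eps) * real z}"
    using assms by (rule rev_finite_subset[OF finite_Pow_iff[THEN iffD2]]) blast
  ultimately show ?thesis by simp
qed

lemma phi_le:
  assumes "finite X" "X' \<subseteq> X" "real (card X') \<ge> real (card X) - (1 + eps) * real z"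
  shows "phi X d z eps E \<le> maxdist d X' E"
proof -
  have "finite {maxdist d X' E | X'. X' \<subseteq> X \<and> real (card X') \<ge> real (card X) - (1 + eps) * real z}"
    using phi_set_finite[OF assms(1)] .
  then show ?thesis unfolding phi_def using assms by (intro Min_le) auto
qed

lemma phi_attained:
  assumes "finite X" "0 \<le> eps"
  shows "\<exists>X'. X' \<subseteq> X \<and> real (card X') \<ge> real (card X) - (1 + eps) * real z \<and> phi X d z eps E = maxdist d X' E"
proof -
  let ?S = "{maxdist d X' E | X'. X' \<subseteq> X \<and> real (card X') \<ge> real (card X) - (1 + eps) * real z}"
  have "finite ?S"
    using phi_set_finite[OF assms(1)] .
  moreover have "X \<subseteq> X \<and> real (card X) \<ge> real (card X) - (1+eps)*real z" using assms by simp
  then have "maxdist d X E \<in> ?S" by blast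
  then have "?S \<noteq> {}" by blast
  ultimately have "Min ?S \<in> ?S" by (rule Min_in)
  then show ?thesis unfolding phi_def by blast
qed

lemma phi_mono:
  assumes "finite X" "0 \<le> eps" "E \<subseteq> E'" "E \<noteq> {}" "finite E'"
  shows "phi X d z eps E' \<le> phi X d z eps E"
proof -
  obtain X' where X': "X' \<subseteq> X" "real (card X') \<ge> real (card X) - (1 + eps) * real z"
     "phi X d z eps E = maxdist d X' E" using phi_attained[OF assms(1) assms(2), where E=E and d=d and z=z] by blast
  have "phi X d z eps E' \<le> maxdist d X' E'" by (rule phi_le) (use assms X' in auto)
  also have "\<dots> \<le> maxdist d X' E"
    using maxdist_mono[OF finite_subset[OF X'(1) assms(1)] assms(5) assms(3) assms(4)] .
  finally show ?thesis using X' by simp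
qed



lemma final_real:
  fixes eta t :: real and k K :: nat
  assumes eta: "0 < eta" "eta < 1/2" and k: "0 < k" "K \<le> k"
    and t: "t = (2 + 2 / (real k * (1 - eta)) * ln (1 / eta)) * real k / (1 - eta)"
  shows "((1 + eta) / 2) ^ (nat \<lceil>t\<rceil> - 1 + 1) * 2 ^ K \<le> eta"
proof -
  define L where "L = ln (1 / eta)"
  have L: "0 < L" unfolding L_def using eta by simp
  have tpos: "0 < t" unfolding t using eta k L L_def
    by (intro divide_pos_pos mult_pos_pos add_pos_nonneg) auto
  define N where "N = nat \<lceil>t\<rceil>"
  have N1: "nat \<lceil>t\<rceil> - 1 + 1 = N" unfolding N_def using tpos by linarith
  have Nt: "t \<le> real N" unfolding N_def by (rule real_nat_ceiling_ge)
  have "((1 + eta) / 2) ^ N \<le> exp (- ((1 - eta) / 2)) ^ N"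
    using exp_ge_add_one_self[of "- ((1 - eta) / 2)"] eta
    by (intro power_mono) (auto simp: field_simps)
  also have "\<dots> = exp (- ((1 - eta) / 2) * real N)"
    by (simp add: exp_of_nat_mult[symmetric] mult.commute)
  also have "\<dots> \<le> exp (- ((1 - eta) / 2) * t)"
    using Nt eta by (intro exp_mono mult_left_mono_neg) auto
  also have "- ((1 - eta) / 2) * t = - real k - L / (1 - eta)"
  proof -
    have ne: "1 - eta \<noteq> 0" "real k \<noteq> 0" using eta k by auto
    define c where "c = 2 + 2 / (real k * (1 - eta)) * L"
    have tc: "t = c * real k / (1 - eta)" unfolding t c_def L_def ..
    have "(1 - eta) / 2 * t = c * real k / 2"
      unfolding tc using ne by (simp add: field_simps)
    also have "\<dots> = real k + L / (1 - eta)"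
      unfolding c_def using ne by (simp add: field_simps)
    finally have h: "(1 - eta) / 2 * t = real k + L / (1 - eta)" .
    have "- ((1 - eta) / 2) * t = - ((1 - eta) / 2 * t)" by simp
    then show ?thesis using h by linarith
  qed
  also have "exp (- real k - L / (1 - eta)) \<le> exp (- real k - L)"
  proof -
    have "L \<le> L / (1 - eta)" using L eta by (simp add: field_simps)
    then show ?thesis by simp
  qed
  also have "exp (- real k - L) = exp (-1) ^ k * eta"
    unfolding L_def using eta by (simp add: exp_diff exp_minus exp_of_nat_mult[symmetric] ln_div field_simps)
  finally have A: "((1 + eta) / 2) ^ N \<le> exp (-1) ^ k * eta" .
  have "((1 + eta) / 2) ^ N * 2 ^ K \<le> exp (-1) ^ k * eta * 2 ^ k"
    using A by (intro mult_mono power_increasing) (use k eta in auto)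
  also have "\<dots> = (2 * exp (-1)) ^ k * eta" by (simp add: power_mult_distrib)
  also have "\<dots> \<le> 1 ^ k * eta"
  proof -
    have "2 \<le> exp (1::real)" using exp_ge_add_one_self[of 1] by simp
    then have "2 * exp (-1) \<le> (1::real)" by (simp add: exp_minus field_simps)
    then show ?thesis using eta by (intro mult_right_mono power_mono) auto
  qed
  finally show ?thesis using N1 by simp
qed


context
  fixes X :: "'a set" and d :: "'a \<Rightarrow> 'a \<Rightarrow> real" and z :: nat and eps :: real
    and Q :: "'a set \<Rightarrow> 'a set" and Xs Cs :: "'a set" and r :: real
  assumes finX: "finite X" and met: "metric_on X d" and XsX: "Xs \<subseteq> X" and CsX: "Cs \<subseteq> X"
    and Csne: "Cs \<noteq> {}" and cardXs: "card X \<le> card Xs + z" and zlt: "z < card X"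
    and zpos: "0 < z" and epspos: "0 < eps"
    and far: "farthest_rule X d z eps Q" and rdef: "r = maxdist d Xs Cs"
begin

definition hit :: "'a set \<Rightarrow> 'a set" where "hit E = {c \<in> Cs. \<exists>q\<in>E. d q c \<le> r}"
definition isdone :: "'a set \<Rightarrow> bool" where "isdone E \<longleftrightarrow> phi X d z eps E \<le> 2 * r"
definition V :: "'a set \<Rightarrow> real" where "V E = (if isdone E then 0 else 2 ^ card (Cs - hit E))"

lemma d_nonneg: "p \<in> X \<Longrightarrow> q \<in> X \<Longrightarrow> 0 \<le> d p q"
  using met unfolding metric_on_def by blast

lemma d_sym: "p \<in> X \<Longrightarrow> q \<in> X \<Longrightarrow> d p q = d q p"
  using met unfolding metric_on_def by blast

lemma d_tri: "p \<in> X \<Longrightarrow> q \<in> X \<Longrightarrow> w \<in> X \<Longrightarrow> d p w \<le> d p q + d q w"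
  using met unfolding metric_on_def by blast

lemma finCs: "finite Cs" using finite_subset[OF CsX finX] .
lemma finXs: "finite Xs" using finite_subset[OF XsX finX] .

lemma setdist_nonneg: "E \<subseteq> X \<Longrightarrow> E \<noteq> {} \<Longrightarrow> p \<in> X \<Longrightarrow> 0 \<le> setdist d p E"
proof -
  assume a: "E \<subseteq> X" "E \<noteq> {}" "p \<in> X"
  obtain q where "q \<in> E" "setdist d p E = d p q"
    using setdist_ex[OF finite_subset[OF a(1) finX] a(2)] by blast
  then show ?thesis using d_nonneg a by auto
qed

lemma Xs_ne: "Xs \<noteq> {}" using cardXs zlt by auto

lemma center: "p \<in> Xs \<Longrightarrow> \<exists>c\<in>Cs. d p c \<le> r"
proof -
  assume p: "p \<in> Xs"
  obtain c where c: "c \<in> Cs" "setdist d p Cs = d p c"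
    using setdist_ex[OF finCs Csne] by blast
  have "setdist d p Cs \<le> maxdist d Xs Cs" by (rule maxdist_ge[OF finXs p])
  then show ?thesis using c rdef by auto
qed

lemma r_nonneg: "0 \<le> r"
proof -
  obtain p where p: "p \<in> Xs" using Xs_ne by blast
  have "0 \<le> setdist d p Cs" using setdist_nonneg CsX Csne p XsX by blast
  also have "setdist d p Cs \<le> maxdist d Xs Cs" by (rule maxdist_ge[OF finXs p])
  finally show ?thesis using rdef by simp
qed

lemma Xs_ok: "real (card Xs) \<ge> real (card X) - (1 + eps) * real z"
proof -
  have "real (card X) \<le> real (card Xs) + real z" using cardXs by linarith
  moreover have "0 \<le> eps * real z" using epspos by simp
  ultimately show ?thesis by (simp add: algebra_simps)
qed

lemma close_if_hit:
  assumes "E \<subseteq> X" "p \<in> X" "c \<in> hit E" "d p c \<le> r"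
  shows "setdist d p E \<le> 2 * r"
proof -
  obtain q where q: "q \<in> E" "d q c \<le> r" "c \<in> Cs" using assms(3) unfolding hit_def by blast
  have qX: "q \<in> X" "c \<in> X" using q assms(1) CsX by auto
  have "setdist d p E \<le> d p q" by (rule setdist_le[OF finite_subset[OF assms(1) finX] q(1)])
  also have "\<dots> \<le> d p c + d c q" by (rule d_tri) (use assms qX in auto)
  also have "d c q = d q c" by (rule d_sym) (use qX in auto)
  finally show ?thesis using assms(4) q(2) by simp
qed

lemma allhit_done:
  assumes "E \<subseteq> X" "E \<noteq> {}" "hit E = Cs"
  shows "isdone E"
proof -
  have "phi X d z eps E \<le> maxdist d Xs E" by (rule phi_le[OF finX XsX Xs_ok])
  also have "\<dots> \<le> 2 * r"
  proof (rule maxdist_le[OF finXs])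
    fix p assume p: "p \<in> Xs"
    obtain c where c: "c \<in> Cs" "d p c \<le> r" using center[OF p] by blast
    show "setdist d p E \<le> 2 * r"
      by (rule close_if_hit[OF assms(1) _ _ c(2)]) (use p XsX c assms(3) in auto)
  next
    show "0 \<le> 2 * r" using r_nonneg by simp
  qed
  finally show ?thesis unfolding isdone_def .
qed

lemma isdone_mono:
  assumes "E \<subseteq> E'" "E' \<subseteq> X" "E \<noteq> {}" "isdone E"
  shows "isdone E'"
proof -
  have "phi X d z eps E' \<le> phi X d z eps E"
    by (rule phi_mono[OF finX _ assms(1) assms(3) finite_subset[OF assms(2) finX]]) (use epspos in simp)
  then show ?thesis using assms(4) unfolding isdone_def by simp
qed

lemma hit_mono: "E \<subseteq> E' \<Longrightarrow> hit E \<subseteq> hit E'"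
  unfolding hit_def by blast

lemma V_nonneg: "0 \<le> V E" unfolding V_def by simp

lemma V_le: "V E \<le> 2 ^ card Cs"
proof -
  have "card (Cs - hit E) \<le> card Cs" by (rule card_mono[OF finCs]) blast
  then have "(2::real) ^ card (Cs - hit E) \<le> 2 ^ card Cs" by (rule power_increasing) simp
  then show ?thesis unfolding V_def by simp
qed

lemma V_ge1: "\<not> isdone E \<Longrightarrow> 1 \<le> V E"
  unfolding V_def by simp

lemma V_mono:
  assumes "E \<subseteq> E'" "E' \<subseteq> X" "E \<noteq> {}"
  shows "V E' \<le> V E"
proof (cases "isdone E'")
  case True then show ?thesis using V_nonneg[of E] unfolding V_def by simp
next
  case False
  then have nd: "\<not> isdone E" using isdone_mono[OF assms] by blast
  have "card (Cs - hit E') \<le> card (Cs - hit E)"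
    by (rule card_mono) (use finCs hit_mono[OF assms(1)] in auto)
  then have "(2::real) ^ card (Cs - hit E') \<le> 2 ^ card (Cs - hit E)" by (rule power_increasing) simp
  then show ?thesis using False nd unfolding V_def by simp
qed

lemma V_half:
  assumes "E \<subseteq> E'" "E' \<subseteq> X" "E \<noteq> {}" "c \<in> Cs" "c \<notin> hit E" "c \<in> hit E'"
  shows "V E' \<le> V E / 2"
proof (cases "isdone E'")
  case True then show ?thesis using V_nonneg[of E] unfolding V_def by simp
next
  case False
  then have nd: "\<not> isdone E" using isdone_mono[OF assms(1-3)] by blast
  have "card (Cs - hit E') < card (Cs - hit E)"
    by (rule psubset_card_mono) (use finCs hit_mono[OF assms(1)] assms(4-6) in auto)
  then have "(2::real) ^ Suc (card (Cs - hit E')) \<le> 2 ^ card (Cs - hit E)"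
    by (intro power_increasing) auto
  then show ?thesis using False nd unfolding V_def by simp
qed

lemma V_first:
  assumes "S \<subseteq> X" "p \<in> S" "p \<in> Xs"
  shows "V S \<le> 2 ^ card Cs / 2"
proof (cases "isdone S")
  case True then show ?thesis unfolding V_def by simp
next
  case False
  obtain c where c: "c \<in> Cs" "d p c \<le> r" using center[OF assms(3)] by blast
  have "c \<in> hit S" unfolding hit_def using c assms(2) by blast
  then have "card (Cs - hit S) < card Cs"
    by (intro psubset_card_mono) (use finCs c in auto)
  then have "(2::real) ^ Suc (card (Cs - hit S)) \<le> 2 ^ card Cs"
    by (intro power_increasing) auto
  then show ?thesis using False unfolding V_def by simp
qed

lemma V_progress:
  assumes "E \<subseteq> E'" "E' \<subseteq> X" "E \<noteq> {}" "p \<in> E'" "p \<in> Xs" "2 * r < setdist d p E"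
  shows "V E' \<le> V E / 2"
proof -
  obtain c where c: "c \<in> Cs" "d p c \<le> r" using center[OF assms(5)] by blast
  have pX: "p \<in> X" using assms XsX by auto
  have "c \<notin> hit E"
  proof
    assume "c \<in> hit E"
    then have "setdist d p E \<le> 2 * r"
      by (intro close_if_hit[OF _ pX _ c(2)]) (use assms in auto)
    then show False using assms(6) by simp
  qed
  moreover have "c \<in> hit E'" unfolding hit_def using c assms(4) by blast
  ultimately show ?thesis by (rule V_half[OF assms(1-3) c(1)])
qed


lemma notdone_Q:
  assumes E: "E \<subseteq> X" "E \<noteq> {}" and nd: "\<not> isdone E"
  shows "Q E \<subseteq> X \<and> (\<forall>p\<in>Q E. 2 * r < setdist d p E) \<and>
         (1 + eps) * real z \<le> real (card (Q E)) \<and> card (Q E - Xs) \<le> z"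
proof -
  have QX: "Q E \<subseteq> X" and cardQ: "card (Q E) = min (card X) (nat \<lceil>(1 + eps) * real z\<rceil>)"
    and farp: "\<forall>p\<in>Q E. \<forall>q\<in>X - Q E. setdist d q E \<le> setdist d p E"
    using far E unfolding farthest_rule_def by blast+
  define F where "F = {p\<in>X. 2 * r < setdist d p E}"
  have FX: "F \<subseteq> X" unfolding F_def by blast
  have finF: "finite F" using finite_subset[OF FX finX] .
  have cardF: "(1 + eps) * real z < real (card F)"
  proof (rule ccontr)
    assume "\<not> (1 + eps) * real z < real (card F)"
    then have a: "real (card F) \<le> (1 + eps) * real z" by simp
    have "card (X - F) = card X - card F" by (rule card_Diff_subset[OF finF FX])
    moreover have "card F \<le> card X" by (rule card_mono[OF finX FX])
    ultimately have "real (card (X - F)) = real (card X) - real (card F)" by simp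
    then have ok: "real (card (X - F)) \<ge> real (card X) - (1 + eps) * real z" using a by simp
    have "phi X d z eps E \<le> maxdist d (X - F) E" by (rule phi_le[OF finX _ ok]) blast
    also have "\<dots> \<le> 2 * r"
    proof (rule maxdist_le)
      show "finite (X - F)" using finX by simp
      show "0 \<le> 2 * r" using r_nonneg by simp
      fix p assume "p \<in> X - F"
      then show "setdist d p E \<le> 2 * r" unfolding F_def by auto
    qed
    finally show False using nd unfolding isdone_def by simp
  qed
  define m where "m = nat \<lceil>(1 + eps) * real z\<rceil>"
  have mge: "(1 + eps) * real z \<le> real m" unfolding m_def by (rule real_nat_ceiling_ge)
  have mle: "m \<le> card F" unfolding m_def nat_le_iff ceiling_le_iff using cardF by simp
  have "card F \<le> card X" by (rule card_mono[OF finX FX])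
  then have cQ: "card (Q E) = m" using cardQ mle unfolding m_def by simp
  have mpos: "0 < m" using mge zpos epspos
    by (metis add_pos_pos mult_pos_pos not_gr0 of_nat_0 of_nat_0_less_iff zero_less_one linorder_not_le)
  have QF: "Q E \<subseteq> F"
  proof
    fix p assume pQ: "p \<in> Q E"
    show "p \<in> F"
    proof (rule ccontr)
      assume pF: "p \<notin> F"
      have pX: "p \<in> X" using pQ QX by blast
      then have sp: "setdist d p E \<le> 2 * r" using pF unfolding F_def by auto
      have sub: "F \<subseteq> Q E - {p}"
      proof
        fix q assume qF: "q \<in> F"
        then have qX: "q \<in> X" and sq: "2 * r < setdist d q E" unfolding F_def by auto
        have "q \<in> Q E"
        proof (rule ccontr)
          assume "q \<notin> Q E"
          then have "setdist d q E \<le> setdist d p E" using farp pQ qX by blast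
          then show False using sp sq by simp
        qed
        moreover have "q \<noteq> p" using qF pF by blast
        ultimately show "q \<in> Q E - {p}" by blast
      qed
      have "card F \<le> card (Q E - {p})"
        by (rule card_mono[OF _ sub]) (use finite_subset[OF QX finX] in simp)
      also have "\<dots> = m - 1" using pQ cQ by simp
      finally show False using mle mpos by simp
    qed
  qed
  have "card (Q E - Xs) \<le> card (X - Xs)"
    by (rule card_mono) (use finX QX in auto)
  also have "\<dots> = card X - card Xs" by (rule card_Diff_subset[OF finXs XsX])
  also have "\<dots> \<le> z" using cardXs by simp
  finally have cz: "card (Q E - Xs) \<le> z" .
  show ?thesis using QX QF cz mge cQ unfolding F_def by auto
qed


lemma Q_props: "E \<subseteq> X \<Longrightarrow> E \<noteq> {} \<Longrightarrow> Q E \<subseteq> X \<and> Q E \<noteq> {}"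
proof -
  assume E: "E \<subseteq> X" "E \<noteq> {}"
  have QX: "Q E \<subseteq> X" and cardQ: "card (Q E) = min (card X) (nat \<lceil>(1 + eps) * real z\<rceil>)"
    using far E unfolding farthest_rule_def by blast+
  have "0 < (1 + eps) * real z" using epspos zpos by simp
  then have "0 < nat \<lceil>(1 + eps) * real z\<rceil>" by simp
  moreover have "0 < card X" using zlt by simp
  ultimately have "card (Q E) \<noteq> 0" using cardQ by simp
  then show ?thesis using QX by auto
qed

lemma step_support:
  assumes E: "E \<subseteq> X" "E \<noteq> {}"
  shows "\<forall>E'\<in>set_pmf (bind_pmf (sample m2 (Q E)) (\<lambda>S. return_pmf (E \<union> S))). E' \<subseteq> X \<and> E' \<noteq> {}"
proof -
  have Q: "Q E \<subseteq> X" "Q E \<noteq> {}" "finite (Q E)"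
    using Q_props[OF E] finite_subset[of "Q E" X] finX by auto
  show ?thesis using sample_support[OF Q(3) Q(2)] Q(1) E by fastforce
qed

lemma step_bound:
  assumes E: "E \<subseteq> X" "E \<noteq> {}" and eta: "0 < eta" "eta < 1"
    and m2: "real m2 \<ge> ln (1 / eta) / (1 - 1 / (1 + eps))"
  shows "(\<integral>\<^sup>+E'. ennreal (V E') \<partial>bind_pmf (sample m2 (Q E)) (\<lambda>S. return_pmf (E \<union> S)))
           \<le> ennreal ((1 + eta) / 2) * ennreal (V E)"
proof -
  have Q: "Q E \<subseteq> X" "Q E \<noteq> {}" "finite (Q E)"
    using Q_props[OF E] finite_subset[of "Q E" X] finX by auto
  have supp: "\<And>S. S \<in> set_pmf (sample m2 (Q E)) \<Longrightarrow> S \<subseteq> Q E"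
    using sample_support[OF Q(3) Q(2)] by blast
  have eq: "(\<integral>\<^sup>+E'. ennreal (V E') \<partial>bind_pmf (sample m2 (Q E)) (\<lambda>S. return_pmf (E \<union> S)))
      = (\<integral>\<^sup>+S. ennreal (V (E \<union> S)) \<partial>sample m2 (Q E))"
    by (simp add: nn_integral_return)
  have mono: "\<And>S. S \<in> set_pmf (sample m2 (Q E)) \<Longrightarrow> V (E \<union> S) \<le> V E"
    by (rule V_mono) (use E Q supp in auto)
  have "(\<integral>\<^sup>+S. ennreal (V (E \<union> S)) \<partial>sample m2 (Q E)) \<le> ennreal ((1 + eta) / 2 * V E)"
  proof (cases "isdone E")
    case True
    then have V0: "V E = 0" unfolding V_def by simp
    show ?thesis
    proof (rule step_lemma[where B = "{}"])
      show "emeasure (measure_pmf (sample m2 (Q E))) {} \<le> ennreal eta" by simp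
    qed (use V0 mono eta V_nonneg in auto)
  next
    case False
    have nq: "(\<forall>p\<in>Q E. 2 * r < setdist d p E) \<and>
         (1 + eps) * real z \<le> real (card (Q E)) \<and> card (Q E - Xs) \<le> z"
      using notdone_Q[OF E False] by blast
    let ?G = "Q E \<inter> Xs"
    show ?thesis
    proof (rule step_lemma[where B = "{R. R \<inter> ?G = {}}"])
      have "emeasure (measure_pmf (sample m2 (Q E))) {R. R \<inter> ?G = {}}
          \<le> ennreal ((real (card (Q E - ?G)) / real (card (Q E))) ^ m2)"
        by (rule sample_miss[OF Q(3) Q(2)])
      also have "(real (card (Q E - ?G)) / real (card (Q E))) ^ m2 \<le> eta"
      proof (rule pow_small[OF _ _ _ eta(1) m2])
        have cpos: "0 < real (card (Q E))" using Q by (simp add: card_gt_0_iff)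
        have "Q E - ?G = Q E - Xs" by blast
        then have "real (card (Q E - ?G)) \<le> real z" using nq by simp
        then have "real (card (Q E - ?G)) / real (card (Q E)) \<le> real z / real (card (Q E))"
          using cpos by (simp add: divide_right_mono)
        also have "\<dots> \<le> real z / ((1 + eps) * real z)"
          using nq zpos epspos cpos by (intro divide_left_mono) (auto intro!: mult_pos_pos)
        also have "\<dots> = 1 / (1 + eps)" using zpos by simp
        finally show "real (card (Q E - ?G)) / real (card (Q E)) \<le> 1 / (1 + eps)" .
        show "0 \<le> real (card (Q E - ?G)) / real (card (Q E))" by simp
        show "1 / (1 + eps) < 1" using epspos by simp
      qed
      then have "ennreal ((real (card (Q E - ?G)) / real (card (Q E))) ^ m2) \<le> ennreal eta"
        by (rule ennreal_leI)
      finally show "emeasure (measure_pmf (sample m2 (Q E))) {R. R \<inter> ?G = {}} \<le> ennreal eta" .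
    next
      fix S assume S: "S \<in> set_pmf (sample m2 (Q E))" "S \<notin> {R. R \<inter> ?G = {}}"
      then obtain p where p: "p \<in> S" "p \<in> Q E" "p \<in> Xs" by blast
      show "V (E \<union> S) \<le> V E / 2"
        by (rule V_progress[where p = p]) (use E Q supp[OF S(1)] p nq in auto)
    qed (use mono eta V_nonneg in auto)
  qed
  also have "\<dots> = ennreal ((1 + eta) / 2) * ennreal (V E)"
    by (rule ennreal_mult) (use eta V_nonneg in auto)
  finally show ?thesis using eq by simp
qed

lemma init_bound:
  assumes eta: "0 < eta" "eta < 1" and m1pos: "0 < m1"
    and m1: "real m1 \<ge> ln (1 / eta) / (1 - real z / real (card X))"
  shows "(\<integral>\<^sup>+S. ennreal (V S) \<partial>sample m1 X) \<le> ennreal ((1 + eta) / 2 * 2 ^ card Cs)"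
proof (rule step_lemma[where B = "{R. R \<inter> Xs = {}}"])
  have Xne: "X \<noteq> {}" using zlt by auto
  have "emeasure (measure_pmf (sample m1 X)) {R. R \<inter> Xs = {}}
      \<le> ennreal ((real (card (X - Xs)) / real (card X)) ^ m1)"
    by (rule sample_miss[OF finX Xne])
  also have "(real (card (X - Xs)) / real (card X)) ^ m1 \<le> eta"
  proof (rule pow_small[OF _ _ _ eta(1) m1])
    have cpos: "0 < real (card X)" using zlt by simp
    have "card (X - Xs) = card X - card Xs" by (rule card_Diff_subset[OF finXs XsX])
    then have "real (card (X - Xs)) \<le> real z" using cardXs by simp
    then show "real (card (X - Xs)) / real (card X) \<le> real z / real (card X)"
      using cpos by (simp add: divide_right_mono)
    show "0 \<le> real (card (X - Xs)) / real (card X)" by simp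
    show "real z / real (card X) < 1" using zlt cpos by simp
  qed
  then have "ennreal ((real (card (X - Xs)) / real (card X)) ^ m1) \<le> ennreal eta"
    by (rule ennreal_leI)
  finally show "emeasure (measure_pmf (sample m1 X)) {R. R \<inter> Xs = {}} \<le> ennreal eta" .
next
  have Xne: "X \<noteq> {}" using zlt by auto
  fix S assume S: "S \<in> set_pmf (sample m1 X)" "S \<notin> {R. R \<inter> Xs = {}}"
  then obtain p where p: "p \<in> S" "p \<in> Xs" by blast
  have "S \<subseteq> X" using sample_support[OF finX Xne S(1)] by blast
  then show "V S \<le> 2 ^ card Cs / 2" by (rule V_first[OF _ p])
qed (use eta V_le in auto)


lemma final:
  assumes k: "card Cs \<le> k" "0 < k" and eta: "0 < eta" "eta < 1/2"
    and t: "t = (2 + 2 / (real k * (1 - eta)) * ln (1 / eta)) * real k / (1 - eta)"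
  shows "1 - 2 * eta \<le> measure_pmf.prob (algorithm1 X z Q eps eta t) {E. phi X d z eps E \<le> 2 * r}"
proof -
  define gamma where "gamma = real z / real (card X)"
  define m1 where "m1 = nat \<lceil>(1 / (1 - gamma)) * ln (1 / eta)\<rceil>"
  define m2 where "m2 = nat \<lceil>((1 + eps) / eps) * ln (1 / eta)\<rceil>"
  define step where "step = (\<lambda>E. bind_pmf (sample m2 (Q E)) (\<lambda>S. return_pmf (E \<union> S)))"
  define n where "n = nat \<lceil>t\<rceil> - 1"
  have alg: "algorithm1 X z Q eps eta t = ((\<lambda>P. bind_pmf P step) ^^ n) (sample m1 X)"
    unfolding algorithm1_def Let_def gamma_def m1_def m2_def step_def n_def by simp
  have eta1: "eta < 1" using eta by simp
  have cX: "0 < real (card X)" using zlt by simp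
  have g1: "gamma < 1" unfolding gamma_def using zlt cX by simp
  have L: "0 < ln (1 / eta)" using eta by simp
  have m1ge: "real m1 \<ge> ln (1 / eta) / (1 - gamma)"
  proof -
    have "ln (1 / eta) / (1 - gamma) = (1 / (1 - gamma)) * ln (1 / eta)" by simp
    then show ?thesis unfolding m1_def using real_nat_ceiling_ge by metis
  qed
  have m1pos: "0 < m1"
  proof -
    have "0 < ln (1 / eta) / (1 - gamma)" using L g1 by simp
    then show ?thesis using m1ge by linarith
  qed
  have m2ge: "real m2 \<ge> ln (1 / eta) / (1 - 1 / (1 + eps))"
  proof -
    have "1 - 1 / (1 + eps) = eps / (1 + eps)" using epspos by (simp add: field_simps)
    then have "ln (1 / eta) / (1 - 1 / (1 + eps)) = ((1 + eps) / eps) * ln (1 / eta)" by simp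
    then show ?thesis unfolding m2_def using real_nat_ceiling_ge by metis
  qed
  have Xne: "X \<noteq> {}" using zlt by auto
  have it: "(\<forall>E\<in>set_pmf (((\<lambda>P. bind_pmf P step)^^n) (sample m1 X)). E \<subseteq> X \<and> E \<noteq> {}) \<and>
    (\<integral>\<^sup>+E. ennreal (V E) \<partial>measure_pmf (((\<lambda>P. bind_pmf P step)^^n) (sample m1 X)))
      \<le> ennreal ((1 + eta) / 2) ^ n * (\<integral>\<^sup>+E. ennreal (V E) \<partial>sample m1 X)"
  proof (rule iter_bound)
    show "\<forall>E\<in>set_pmf (sample m1 X). E \<subseteq> X \<and> E \<noteq> {}"
      using sample_support[OF finX Xne] m1pos by blast
    fix E assume E: "E \<subseteq> X \<and> E \<noteq> {}"
    show "\<forall>E'\<in>set_pmf (step E). E' \<subseteq> X \<and> E' \<noteq> {}"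
      unfolding step_def using step_support E by blast
    show "(\<integral>\<^sup>+E'. ennreal (V E') \<partial>step E) \<le> ennreal ((1 + eta) / 2) * ennreal (V E)"
      unfolding step_def by (rule step_bound[OF _ _ eta(1) eta1 m2ge]) (use E in auto)
  qed
  have I0: "(\<integral>\<^sup>+S. ennreal (V S) \<partial>sample m1 X) \<le> ennreal ((1 + eta) / 2 * 2 ^ card Cs)"
    by (rule init_bound[OF eta(1) eta1 m1pos]) (use m1ge gamma_def in simp)
  have "(\<integral>\<^sup>+E. ennreal (V E) \<partial>measure_pmf (((\<lambda>P. bind_pmf P step)^^n) (sample m1 X)))
      \<le> ennreal ((1 + eta) / 2) ^ n * ennreal ((1 + eta) / 2 * 2 ^ card Cs)"
    using it I0 by (meson mult_left_mono order_trans zero_le)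
  also have "\<dots> = ennreal (((1 + eta) / 2) ^ n) * ennreal ((1 + eta) / 2 * 2 ^ card Cs)"
    by (subst ennreal_power) (use eta in auto)
  also have "\<dots> = ennreal (((1 + eta) / 2) ^ n * ((1 + eta) / 2 * 2 ^ card Cs))"
    by (rule ennreal_mult[symmetric]) (use eta in auto)
  also have "((1 + eta) / 2) ^ n * ((1 + eta) / 2 * 2 ^ card Cs) = ((1 + eta) / 2) ^ (n + 1) * 2 ^ card Cs"
    by simp
  also have "ennreal (((1 + eta) / 2) ^ (n + 1) * 2 ^ card Cs) \<le> ennreal eta"
    unfolding n_def by (rule ennreal_leI, rule final_real[OF eta k(2) k(1) t])
  finally have IV: "(\<integral>\<^sup>+E. ennreal (V E) \<partial>measure_pmf (algorithm1 X z Q eps eta t)) \<le> ennreal eta"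
    unfolding alg .
  let ?M = "measure_pmf (algorithm1 X z Q eps eta t)"
  have "emeasure ?M {E. \<not> isdone E} = (\<integral>\<^sup>+E. indicator {E. \<not> isdone E} E \<partial>?M)"
    by simp
  also have "\<dots> \<le> (\<integral>\<^sup>+E. ennreal (V E) \<partial>?M)"
  proof (rule nn_integral_mono)
    fix E
    show "indicator {E. \<not> isdone E} E \<le> ennreal (V E)"
      using V_ge1[of E] by (cases "isdone E") (auto simp: indicator_def ennreal_leI)
  qed
  also note IV
  finally have "emeasure ?M {E. \<not> isdone E} \<le> ennreal eta" .
  then have bad: "measure ?M {E. \<not> isdone E} \<le> eta"
    using eta by (simp add: measure_pmf.emeasure_eq_measure ennreal_le_iff)
  have "{E. phi X d z eps E \<le> 2 * r} = space ?M - {E. \<not> isdone E}"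
    unfolding isdone_def by auto
  then have "measure ?M {E. phi X d z eps E \<le> 2 * r} = 1 - measure ?M {E. \<not> isdone E}"
    using measure_pmf.prob_compl[of "{E. \<not> isdone E}"] by simp
  then show ?thesis using bad eta by simp
qed

end


theorem theorem5:
  fixes X :: "'a set" and d :: "'a \<Rightarrow> 'a \<Rightarrow> real" and k z :: nat
    and eps eta :: real and Q :: "'a set \<Rightarrow> 'a set"
  assumes "finite X" and "metric_on X d"
    and "k > 0" and "z > 0" and "z < card X"
    and "eps > 0" and "eta > 0" and "eta < 1/2"
    and "farthest_rule X d z eps Q"
  shows "let c = 2 + 2 / (real k * (1 - eta)) * ln (1 / eta);
             t = c * real k / (1 - eta)
         in measure_pmf.prob (algorithm1 X z Q eps eta t)
              {E. phi X d z eps E \<le> 2 * r_opt X d k z} \<ge> 1 - 2 * eta"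
proof -
  let ?S = "{maxdist d X' C | X' C. X' \<subseteq> X \<and> card X' \<ge> card X - z \<and> C \<subseteq> X \<and> C \<noteq> {} \<and> card C \<le> k}"
  have finS: "finite ?S"
  proof -
    have "?S \<subseteq> (\<lambda>p. maxdist d (fst p) (snd p)) ` (Pow X \<times> Pow X)" by force
    then show ?thesis by (rule finite_subset) (use assms(1) in simp)
  qed
  obtain x0 where x0: "x0 \<in> X" using assms(5) by (metis card.empty all_not_in_conv not_less0)
  have "X \<subseteq> X \<and> card X \<ge> card X - z \<and> {x0} \<subseteq> X \<and> {x0} \<noteq> {} \<and> card {x0} \<le> k"
    using x0 assms(3) by simp
  then have "maxdist d X {x0} \<in> ?S" by blast
  then have "?S \<noteq> {}" by blast
  then have "Min ?S \<in> ?S" using finS by (intro Min_in) auto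
  then obtain Xs Cs where opt: "Xs \<subseteq> X" "card Xs \<ge> card X - z" "Cs \<subseteq> X" "Cs \<noteq> {}" "card Cs \<le> k"
      "Min ?S = maxdist d Xs Cs" by blast
  have ropt: "r_opt X d k z = maxdist d Xs Cs" unfolding r_opt_def using opt(6) .
  have cXs: "card X \<le> card Xs + z" using opt(2) by simp
  define t where "t = (2 + 2 / (real k * (1 - eta)) * ln (1 / eta)) * real k / (1 - eta)"
  have "1 - 2 * eta \<le> measure_pmf.prob (algorithm1 X z Q eps eta t) {E. phi X d z eps E \<le> 2 * maxdist d Xs Cs}"
    by (rule final[OF assms(1,2) opt(1,3,4) cXs assms(5,4,6,9) refl opt(5) assms(3,7,8) t_def])
  then show ?thesis unfolding Let_def ropt t_def by simp
qed

end
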